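(* Let $G$ be the line graph of a multigraph $H$ with $\Delta(H)<\Delta(G)$. If $G$ is BK-free, then $H$ has no bipartite submultigraph $B$ with at least one edge such that for every edge $xy\in E(B)$, either $d_B(y)\ge d_B(x)=d_H(x)$ or $d_B(x)\ge d_B(y)=d_H(y)$.
   Context: Multigraphs are loopless but may have parallel edges; degrees count edges with multiplicity. The line graph of $H$ has vertex set $E(H)$, two vertices adjacent when the corresponding edges share an endpoint. For a graph $G$ and $f:V(G)\to\mathbb{Z}^+$, an orientation $D$ of $E(G)$ is an Alon--Tarsi orientation for $f$ if $d^+_D(v)<f(v)$ for every vertex $v$ and the number of spanning Eulerian subgraphs of $D$ (spanning subdigraphs in which every vertex has equal in- and out-degree) with an even number of edges differs from the number with an odd number of edges; $G$ is $f$-AT if such an orientation exists. A digraph (in which some edges may be oriented in both directions) is kernel-perfect if every induced subdigraph $D'$ has a kernel, i.e., a set $I\subseteq V(D')$ with no arc between two of its vertices such that every vertex of $D'$ not in $I$ has an out-neighbor in $I$. A graph $H$ is $f$-KP if some supergraph $H'$ of $H$ on the same vertex set (possibly with parallel edges) has a kernel-perfect orientation with $d^+(v)<f(v)$ for all $v$. A connected graph $G$ is BK-free if it has no induced subgraph $H$ that is $f_H$-AT or $f_H$-KP, where $f_H(v)=d_H(v)-1+\Delta(G)-d_G(v)$ for $v\in V(H)$. *)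

theory Defs
  imports Main "HOL-Library.Multiset"
begin

text \<open>A (loopless) multigraph H is given by a vertex set V, an edge set E of edge
identifiers, and an endpoint map ends with ends e a 2-element subset of V.
Parallel edges are distinct identifiers with the same endpoints.\<close>

definition mdeg :: "'e set \<Rightarrow> ('e \<Rightarrow> 'v set) \<Rightarrow> 'v \<Rightarrow> nat" where
  "mdeg E ends v = card {e \<in> E. v \<in> ends e}"

definition mmaxdeg :: "'v set \<Rightarrow> 'e set \<Rightarrow> ('e \<Rightarrow> 'v set) \<Rightarrow> nat" where
  "mmaxdeg V E ends = Max (insert 0 (mdeg E ends ` V))"

definition line_adj :: "('e \<Rightarrow> 'v set) \<Rightarrow> 'e \<Rightarrow> 'e \<Rightarrow> bool" where
  "line_adj ends e f \<longleftrightarrow> e \<noteq> f \<and> ends e \<inter> ends f \<noteq> {}"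

definition deg :: "'a set \<Rightarrow> ('a \<Rightarrow> 'a \<Rightarrow> bool) \<Rightarrow> 'a \<Rightarrow> nat" where
  "deg S adj v = card {w \<in> S. adj v w}"

definition maxdeg :: "'a set \<Rightarrow> ('a \<Rightarrow> 'a \<Rightarrow> bool) \<Rightarrow> nat" where
  "maxdeg S adj = Max (insert 0 (deg S adj ` S))"

definition connected_graph :: "'a set \<Rightarrow> ('a \<Rightarrow> 'a \<Rightarrow> bool) \<Rightarrow> bool" where
  "connected_graph S adj \<longleftrightarrow> S \<noteq> {} \<and>
     (\<forall>u\<in>S. \<forall>v\<in>S. (\<lambda>x y. x \<in> S \<and> y \<in> S \<and> adj x y)\<^sup>*\<^sup>* u v)"

definition is_orientation :: "'a set \<Rightarrow> ('a \<Rightarrow> 'a \<Rightarrow> bool) \<Rightarrow> ('a \<times> 'a) set \<Rightarrow> bool" where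
  "is_orientation T adj Ori \<longleftrightarrow> Ori \<subseteq> T \<times> T \<and>
     (\<forall>u\<in>T. \<forall>v\<in>T. adj u v \<longrightarrow> (u, v) \<in> Ori \<or> (v, u) \<in> Ori) \<and>
     (\<forall>(u, v)\<in>Ori. adj u v \<and> (v, u) \<notin> Ori)"

definition eulerian_on :: "'a set \<Rightarrow> ('a \<times> 'a) set \<Rightarrow> bool" where
  "eulerian_on T A \<longleftrightarrow> (\<forall>v\<in>T. card {w. (v, w) \<in> A} = card {w. (w, v) \<in> A})"

definition f_AT :: "'a set \<Rightarrow> ('a \<Rightarrow> 'a \<Rightarrow> bool) \<Rightarrow> ('a \<Rightarrow> int) \<Rightarrow> bool" where
  "f_AT T adj f \<longleftrightarrow> (\<exists>Ori. is_orientation T adj Ori \<and>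
     (\<forall>v\<in>T. int (card {w. (v, w) \<in> Ori}) < f v) \<and>
     card {A. A \<subseteq> Ori \<and> eulerian_on T A \<and> even (card A)}
       \<noteq> card {A. A \<subseteq> Ori \<and> eulerian_on T A \<and> odd (card A)})"

definition kernel_perfect :: "'a set \<Rightarrow> ('a \<Rightarrow> 'a \<Rightarrow> bool) \<Rightarrow> bool" where
  "kernel_perfect T arc \<longleftrightarrow> (\<forall>S \<subseteq> T. \<exists>I \<subseteq> S.
     (\<forall>x\<in>I. \<forall>y\<in>I. \<not> arc x y) \<and> (\<forall>x \<in> S - I. \<exists>y\<in>I. arc x y))"

text \<open>An oriented multigraph is a multiset of oriented edges (u, v, b): an edge
between u and v, oriented from u to v, and additionally from v to u if b.\<close>
definition arc_of :: "('a \<times> 'a \<times> bool) multiset \<Rightarrow> 'a \<Rightarrow> 'a \<Rightarrow> bool" where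
  "arc_of D x y \<longleftrightarrow> (\<exists>(u, v, b)\<in>#D. (u = x \<and> v = y) \<or> (b \<and> u = y \<and> v = x))"

definition outdeg_of :: "('a \<times> 'a \<times> bool) multiset \<Rightarrow> 'a \<Rightarrow> nat" where
  "outdeg_of D x = size (filter_mset (\<lambda>(u, v, b). u = x \<or> (b \<and> v = x)) D)"

definition f_KP :: "'a set \<Rightarrow> ('a \<Rightarrow> 'a \<Rightarrow> bool) \<Rightarrow> ('a \<Rightarrow> int) \<Rightarrow> bool" where
  "f_KP T adj f \<longleftrightarrow> (\<exists>D :: ('a \<times> 'a \<times> bool) multiset.
     (\<forall>(u, v, b)\<in>#D. u \<in> T \<and> v \<in> T \<and> u \<noteq> v) \<and>
     (\<forall>u\<in>T. \<forall>v\<in>T. adj u v \<longrightarrow> (\<exists>(a, c, b)\<in>#D. {a, c} = {u, v})) \<and>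
     (\<forall>v\<in>T. int (outdeg_of D v) < f v) \<and>
     kernel_perfect T (arc_of D))"

definition fH :: "'a set \<Rightarrow> ('a \<Rightarrow> 'a \<Rightarrow> bool) \<Rightarrow> 'a set \<Rightarrow> 'a \<Rightarrow> int" where
  "fH S adj T v = int (deg T adj v) - 1 + int (maxdeg S adj) - int (deg S adj v)"

definition BK_free :: "'a set \<Rightarrow> ('a \<Rightarrow> 'a \<Rightarrow> bool) \<Rightarrow> bool" where
  "BK_free S adj \<longleftrightarrow> connected_graph S adj \<and>
     (\<forall>T \<subseteq> S. T \<noteq> {} \<longrightarrow> \<not> f_AT T adj (fH S adj T) \<and> \<not> f_KP T adj (fH S adj T))"

definition bipartite_edges :: "'e set \<Rightarrow> ('e \<Rightarrow> 'v set) \<Rightarrow> bool" where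
  "bipartite_edges B ends \<longleftrightarrow> (\<exists>c :: 'v \<Rightarrow> bool. \<forall>e\<in>B. \<forall>x\<in>ends e. \<forall>y\<in>ends e. x \<noteq> y \<longrightarrow> c x \<noteq> c y)"

end

theory Submission
  imports Defs
begin

lemma hall_theorem:
  fixes A :: "'a set" and G :: "'a \<Rightarrow> 'b set"
  assumes "finite A" "\<forall>a\<in>A. finite (G a)"
    and "\<forall>B\<subseteq>A. card B \<le> card (\<Union>(G ` B))"
  shows "\<exists>g. inj_on g A \<and> (\<forall>a\<in>A. g a \<in> G a)"
  using assms
proof (induction "card A" arbitrary: A G rule: less_induct)
  case less
  show ?case
  proof (cases "A = {}")
    case True then show ?thesis by auto
  next
    case Ane: False
    show ?thesis
    proof (cases "\<exists>B. B \<subseteq> A \<and> B \<noteq> {} \<and> B \<noteq> A \<and> card (\<Union>(G ` B)) \<le> card B")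
      case False
      then have strict: "\<And>B. B \<subseteq> A \<Longrightarrow> B \<noteq> {} \<Longrightarrow> B \<noteq> A \<Longrightarrow> card B < card (\<Union>(G ` B))"
        by (meson not_le)
      obtain a where a: "a \<in> A" using Ane by auto
      have "card {a} \<le> card (G a)" using less.prems(3) a by (metis empty_subsetI image_empty image_insert insert_subset cSup_singleton Union_insert Sup_empty sup_bot_right)
      then have "G a \<noteq> {}" by auto
      then obtain b where b: "b \<in> G a" by auto
      define A' where "A' = A - {a}"
      define G' where "G' = (\<lambda>x. G x - {b})"
      have cA': "card A' < card A" unfolding A'_def using a less.prems(1) by (metis card_Diff1_less)
      have fin': "finite A'" "\<forall>x\<in>A'. finite (G' x)" unfolding A'_def G'_def using less.prems by auto
      have hall': "\<forall>B\<subseteq>A'. card B \<le> card (\<Union>(G' ` B))"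
      proof (intro allI impI)
        fix B assume B: "B \<subseteq> A'"
        show "card B \<le> card (\<Union>(G' ` B))"
        proof (cases "B = {}")
          case True then show ?thesis by simp
        next
          case False
          have "B \<subseteq> A" "B \<noteq> A" using B a unfolding A'_def by auto
          then have lt: "card B < card (\<Union>(G ` B))" using strict False by auto
          have eq: "\<Union>(G' ` B) = \<Union>(G ` B) - {b}" unfolding G'_def by auto
          have "finite (\<Union>(G ` B))" using less.prems(2) \<open>B \<subseteq> A\<close> less.prems(1) finite_subset by (meson UN_iff finite_UN_I rev_finite_subset subsetD)
          then have "card (\<Union>(G ` B) - {b}) \<ge> card (\<Union>(G ` B)) - 1"
            by (metis card_Diff_singleton diff_le_self diff_Suc_1 le_refl card_Diff_singleton_if)
          then show ?thesis using lt unfolding eq by linarith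
        qed
      qed
      obtain g' where g': "inj_on g' A'" "\<forall>x\<in>A'. g' x \<in> G' x"
        using less.hyps[OF cA' fin' hall'] by blast
      define g where "g = g'(a := b)"
      have "inj_on g A"
      proof (rule inj_onI)
        fix x y assume xy: "x \<in> A" "y \<in> A" "g x = g y"
        show "x = y"
        proof (cases "x = a"; cases "y = a")
          assume "x = a" "y \<noteq> a"
          then have "y \<in> A'" "g y = g' y" using xy unfolding A'_def g_def by auto
          then show ?thesis using g'(2) xy \<open>x = a\<close> unfolding g_def G'_def by auto
        next
          assume "x \<noteq> a" "y = a"
          then have "x \<in> A'" "g x = g' x" using xy unfolding A'_def g_def by auto
          then show ?thesis using g'(2) xy \<open>y = a\<close> unfolding g_def G'_def by auto
        next
          assume "x \<noteq> a" "y \<noteq> a"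
          then show ?thesis using xy g'(1) unfolding A'_def g_def by (auto dest: inj_onD)
        qed simp
      qed
      moreover have "\<forall>x\<in>A. g x \<in> G x" using g'(2) b unfolding g_def A'_def G'_def by auto
      ultimately show ?thesis by blast
    next
      case True
      then obtain B where B: "B \<subseteq> A" "B \<noteq> {}" "B \<noteq> A" "card (\<Union>(G ` B)) \<le> card B" by blast
      have finB: "finite B" using B(1) less.prems(1) finite_subset by auto
      have cB: "card B < card A" using B less.prems(1) by (meson psubsetI psubset_card_mono)
      have hallB: "\<forall>C\<subseteq>B. card C \<le> card (\<Union>(G ` C))" using less.prems(3) B(1) by auto
      obtain g1 where g1: "inj_on g1 B" "\<forall>x\<in>B. g1 x \<in> G x"
        using less.hyps[OF cB finB _ hallB] less.prems(2) B(1) by blast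
      define U where "U = \<Union>(G ` B)"
      have finU: "finite U" unfolding U_def using finB less.prems(2) B(1) by auto
      have cardU: "card U = card B" using B(4) less.prems(3) B(1) unfolding U_def by (simp add: le_antisym)
      define A2 where "A2 = A - B"
      define G2 where "G2 = (\<lambda>x. G x - U)"
      have cA2: "card A2 < card A" unfolding A2_def using B less.prems(1)
        by (metis Diff_subset card_seteq finite_Diff not_le subset_Diff_insert Diff_empty Diff_eq_empty_iff card_mono psubsetI psubset_card_mono Diff_mono equals0I inf.orderE subset_refl double_diff)
      have fin2: "finite A2" "\<forall>x\<in>A2. finite (G2 x)" unfolding A2_def G2_def using less.prems by auto
      have hall2: "\<forall>C\<subseteq>A2. card C \<le> card (\<Union>(G2 ` C))"
      proof (intro allI impI)
        fix C assume C: "C \<subseteq> A2"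
        have finC: "finite C" using C fin2(1) finite_subset by auto
        have CB: "C \<inter> B = {}" using C unfolding A2_def by auto
        have "C \<union> B \<subseteq> A" using C B(1) unfolding A2_def by auto
        then have h: "card (C \<union> B) \<le> card (\<Union>(G ` (C \<union> B)))" using less.prems(3) by blast
        have e1: "\<Union>(G ` (C \<union> B)) = \<Union>(G2 ` C) \<union> U" unfolding G2_def U_def by auto
        have disj: "\<Union>(G2 ` C) \<inter> U = {}" unfolding G2_def by auto
        have fin3: "finite (\<Union>(G2 ` C))" using finC fin2(2) C by auto
        have "card (\<Union>(G ` (C \<union> B))) = card (\<Union>(G2 ` C)) + card U"
          using e1 disj fin3 finU by (simp add: card_Un_disjoint)
        moreover have "card (C \<union> B) = card C + card B" using CB finC finB by (simp add: card_Un_disjoint)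
        ultimately show "card C \<le> card (\<Union>(G2 ` C))" using h cardU by linarith
      qed
      obtain g2 where g2: "inj_on g2 A2" "\<forall>x\<in>A2. g2 x \<in> G2 x"
        using less.hyps[OF cA2 fin2 hall2] by blast
      define g where "g = (\<lambda>x. if x \<in> B then g1 x else g2 x)"
      have "inj_on g A"
      proof (rule inj_onI)
        fix x y assume xy: "x \<in> A" "y \<in> A" "g x = g y"
        have inU: "\<And>z. z \<in> B \<Longrightarrow> g1 z \<in> U" using g1(2) unfolding U_def by auto
        have notU: "\<And>z. z \<in> A \<Longrightarrow> z \<notin> B \<Longrightarrow> g2 z \<notin> U" using g2(2) unfolding A2_def G2_def by auto
        show "x = y"
        proof (cases "x \<in> B"; cases "y \<in> B")
          assume "x \<in> B" "y \<in> B" then show ?thesis using xy g1(1) unfolding g_def by (auto dest: inj_onD)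
        next
          assume "x \<in> B" "y \<notin> B" then show ?thesis using xy inU notU unfolding g_def by force
        next
          assume "x \<notin> B" "y \<in> B" then show ?thesis using xy inU notU unfolding g_def by force
        next
          assume "x \<notin> B" "y \<notin> B" then show ?thesis using xy g2(1) unfolding g_def A2_def by (auto dest: inj_onD)
        qed
      qed
      moreover have "\<forall>x\<in>A. g x \<in> G x" using g1(2) g2(2) unfolding g_def A2_def G2_def by auto
      ultimately show ?thesis by blast
    qed
  qed
qed

definition fib :: "('e \<Rightarrow> 'v) \<Rightarrow> 'e set \<Rightarrow> 'v \<Rightarrow> 'e set" where
  "fib p T a = {e \<in> T. p e = a}"

definition dg :: "('e \<Rightarrow> 'v) \<Rightarrow> 'e set \<Rightarrow> 'v \<Rightarrow> nat" where
  "dg p T a = card (fib p T a)"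

definition goodr :: "('e \<Rightarrow> 'v) \<Rightarrow> 'e set \<Rightarrow> ('e \<Rightarrow> nat) \<Rightarrow> bool" where
  "goodr p T r \<longleftrightarrow> (\<forall>a. bij_betw r (fib p T a) {..<dg p T a})"

lemma fib_notin: "a \<notin> p ` M \<Longrightarrow> fib p T a = fib p (T - M) a"
  unfolding fib_def by auto

lemma fib_in:
  assumes "m \<in> M" "M \<subseteq> T" "inj_on p M"
  shows "fib p T (p m) = insert m (fib p (T - M) (p m))" "m \<notin> fib p (T - M) (p m)"
  using assms unfolding fib_def by (auto dest: inj_onD)

lemma dg_notin: "a \<notin> p ` M \<Longrightarrow> dg p T a = dg p (T - M) a"
  unfolding dg_def using fib_notin by metis

lemma dg_in:
  assumes "m \<in> M" "M \<subseteq> T" "inj_on p M" "finite T"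
  shows "dg p T (p m) = Suc (dg p (T - M) (p m))"
proof -
  have "finite (fib p (T - M) (p m))" using assms(4) unfolding fib_def by auto
  then show ?thesis unfolding dg_def using fib_in[OF assms(1-3)] by simp
qed

lemma dg_le: "finite T \<Longrightarrow> dg p (T - M) a \<le> dg p T a"
  unfolding dg_def fib_def by (rule card_mono) auto

lemma goodr_bottom:
  assumes fin: "finite T" and M: "M \<subseteq> T" "inj_on p M" and g: "goodr p (T - M) r'"
  shows "goodr p T (\<lambda>e. if e \<in> M then dg p (T - M) (p e) else r' e)"
  unfolding goodr_def
proof
  fix a
  define r where "r = (\<lambda>e. if e \<in> M then dg p (T - M) (p e) else r' e)"
  show "bij_betw r (fib p T a) {..<dg p T a}"
  proof (cases "a \<in> p ` M")
    case False
    have "bij_betw r' (fib p (T - M) a) {..<dg p (T - M) a}" using g unfolding goodr_def by blast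
    moreover have "\<And>e. e \<in> fib p (T - M) a \<Longrightarrow> r e = r' e" unfolding r_def fib_def by auto
    ultimately show ?thesis using fib_notin[OF False] dg_notin[OF False] bij_betw_cong by metis
  next
    case True
    then obtain m where m: "m \<in> M" "a = p m" by auto
    define F where "F = fib p (T - M) a"
    have b1: "bij_betw r' F {..<dg p (T - M) a}" using g unfolding goodr_def F_def by blast
    have "\<And>e. e \<in> F \<Longrightarrow> r e = r' e" unfolding r_def F_def fib_def by auto
    then have b2: "bij_betw r F {..<dg p (T - M) a}" using b1 bij_betw_cong by metis
    have b3: "bij_betw r {m} {dg p (T - M) a}" unfolding r_def using m by (simp add: bij_betw_def)
    have b4: "bij_betw r (F \<union> {m}) ({..<dg p (T - M) a} \<union> {dg p (T - M) a})"
      by (rule bij_betw_combine[OF b2 b3]) auto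
    have e1: "F \<union> {m} = fib p T a" using fib_in[OF m(1) M] m(2) unfolding F_def by auto
    have e2: "{..<dg p (T - M) a} \<union> {dg p (T - M) a} = {..<dg p T a}"
      using dg_in[OF m(1) M fin] m(2) by auto
    show ?thesis using b4 e1 e2 by simp
  qed
qed

lemma goodr_top:
  assumes fin: "finite T" and M: "M \<subseteq> T" "inj_on q M" and g: "goodr q (T - M) r'"
  shows "goodr q T (\<lambda>e. if e \<in> M then 0 else if q e \<in> q ` M then Suc (r' e) else r' e)"
  unfolding goodr_def
proof
  fix a
  define r where "r = (\<lambda>e. if e \<in> M then 0 else if q e \<in> q ` M then Suc (r' e) else r' e)"
  show "bij_betw r (fib q T a) {..<dg q T a}"
  proof (cases "a \<in> q ` M")
    case False
    have "bij_betw r' (fib q (T - M) a) {..<dg q (T - M) a}" using g unfolding goodr_def by blast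
    moreover have "\<And>e. e \<in> fib q (T - M) a \<Longrightarrow> r e = r' e" unfolding r_def fib_def using False by auto
    ultimately show ?thesis using fib_notin[OF False] dg_notin[OF False] bij_betw_cong by metis
  next
    case True
    then obtain m where m: "m \<in> M" "a = q m" by auto
    define F where "F = fib q (T - M) a"
    have b1: "bij_betw r' F {..<dg q (T - M) a}" using g unfolding goodr_def F_def by blast
    have b1': "bij_betw (Suc \<circ> r') F (Suc ` {..<dg q (T - M) a})"
      by (rule bij_betw_trans[OF b1]) (simp add: bij_betw_def)
    have "\<And>e. e \<in> F \<Longrightarrow> r e = (Suc \<circ> r') e" unfolding r_def F_def fib_def using True by auto
    then have b2: "bij_betw r F (Suc ` {..<dg q (T - M) a})" using b1' bij_betw_cong by metis
    have b3: "bij_betw r {m} {0}" unfolding r_def using m by (simp add: bij_betw_def)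
    have b4: "bij_betw r (F \<union> {m}) (Suc ` {..<dg q (T - M) a} \<union> {0})"
      by (rule bij_betw_combine[OF b2 b3]) auto
    have e1: "F \<union> {m} = fib q T a" using fib_in[OF m(1) M] m(2) unfolding F_def by auto
    have e2: "Suc ` {..<dg q (T - M) a} \<union> {0} = {..<dg q T a}"
      using dg_in[OF m(1) M fin] m(2) lessThan_Suc_eq_insert_0 by auto
    show ?thesis using b4 e1 e2 by simp
  qed
qed

definition rankok :: "('e \<Rightarrow> 'v) \<Rightarrow> ('e \<Rightarrow> 'w) \<Rightarrow> 'e set \<Rightarrow> ('e \<Rightarrow> nat) \<Rightarrow> ('e \<Rightarrow> nat) \<Rightarrow> bool" where
  "rankok p q T rp rq \<longleftrightarrow> goodr p T rp \<and> goodr q T rq \<and>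
     (\<forall>e\<in>T. rp e + rq e < max (dg p T (p e)) (dg q T (q e)))"

lemma rankok_swap: "rankok p q T rp rq \<Longrightarrow> rankok q p T rq rp"
  unfolding rankok_def by (auto simp: max.commute add.commute)

lemma rank_step:
  assumes fin: "finite T" and M: "M \<subseteq> T" "inj_on p M" "inj_on q M"
    and P: "\<forall>e\<in>T. q e \<in> q ` M \<and> p e \<notin> p ` M \<longrightarrow> dg p T (p e) < dg q T (q e)"
    and IH: "rankok p q (T - M) rp' rq'"
  shows "\<exists>rp rq. rankok p q T rp rq"
proof -
  define rp where "rp = (\<lambda>e. if e \<in> M then dg p (T - M) (p e) else rp' e)"
  define rq where "rq = (\<lambda>e. if e \<in> M then 0 else if q e \<in> q ` M then Suc (rq' e) else rq' e)"
  have g1: "goodr p T rp" unfolding rp_def by (rule goodr_bottom[OF fin M(1,2)]) (use IH in \<open>simp add: rankok_def\<close>)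
  have g2: "goodr q T rq" unfolding rq_def by (rule goodr_top[OF fin M(1,3)]) (use IH in \<open>simp add: rankok_def\<close>)
  have "\<forall>e\<in>T. rp e + rq e < max (dg p T (p e)) (dg q T (q e))"
  proof
    fix e assume e: "e \<in> T"
    show "rp e + rq e < max (dg p T (p e)) (dg q T (q e))"
    proof (cases "e \<in> M")
      case True
      then show ?thesis unfolding rp_def rq_def using dg_in[OF True M(1,2) fin] by simp
    next
      case eM: False
      have ih: "rp' e + rq' e < max (dg p (T - M) (p e)) (dg q (T - M) (q e))"
        using IH e eM unfolding rankok_def by auto
      have le1: "dg p (T - M) (p e) \<le> dg p T (p e)" "dg q (T - M) (q e) \<le> dg q T (q e)"
        by (rule dg_le[OF fin])+
      show ?thesis
      proof (cases "q e \<in> q ` M")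
        case False
        then show ?thesis unfolding rp_def rq_def using eM ih le1 by auto
      next
        case qin: True
        then obtain m where m: "m \<in> M" "q e = q m" by auto
        have dq: "dg q T (q e) = Suc (dg q (T - M) (q e))" using dg_in[OF m(1) M(1,3) fin] m(2) by simp
        have "max (dg p (T - M) (p e)) (dg q (T - M) (q e)) < max (dg p T (p e)) (dg q T (q e))"
        proof (cases "p e \<in> p ` M")
          case True
          then obtain m' where m': "m' \<in> M" "p e = p m'" by auto
          have "dg p T (p e) = Suc (dg p (T - M) (p e))" using dg_in[OF m'(1) M(1,2) fin] m'(2) by simp
          then show ?thesis using dq by auto
        next
          case False
          have "dg p T (p e) < dg q T (q e)" using P e qin False by auto
          moreover have "dg p T (p e) = dg p (T - M) (p e)" using dg_notin[OF False] by simp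
          ultimately show ?thesis using dq by auto
        qed
        then show ?thesis unfolding rp_def rq_def using eM ih qin by auto
      qed
    qed
  qed
  then show ?thesis using g1 g2 unfolding rankok_def by blast
qed

definition edD :: "nat \<Rightarrow> ('e \<Rightarrow> 'v) \<Rightarrow> ('e \<Rightarrow> 'w) \<Rightarrow> 'e set \<Rightarrow> 'e set" where
  "edD D p q T = {e \<in> T. dg p T (p e) = D \<and> dg q T (q e) = D}"

definition nbD :: "nat \<Rightarrow> ('e \<Rightarrow> 'v) \<Rightarrow> ('e \<Rightarrow> 'w) \<Rightarrow> 'e set \<Rightarrow> 'w set \<Rightarrow> 'v set" where
  "nbD D p q T R = p ` {e \<in> edD D p q T. q e \<in> R}"

definition topD :: "nat \<Rightarrow> ('e \<Rightarrow> 'w) \<Rightarrow> 'e set \<Rightarrow> 'w set" where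
  "topD D q T = {b \<in> q ` T. dg q T b = D}"

lemma edD_swap: "edD D q p T = edD D p q T"
  unfolding edD_def by auto

lemma caseA:
  assumes fin: "finite T"
    and Dp: "\<forall>e\<in>T. dg p T (p e) \<le> D"
    and R: "R \<subseteq> topD D q T" "R \<noteq> {}" "card (nbD D p q T R) \<le> card R"
  shows "\<exists>M\<subseteq>T. M \<noteq> {} \<and> inj_on p M \<and> inj_on q M \<and>
           (\<forall>e\<in>T. q e \<in> q ` M \<and> p e \<notin> p ` M \<longrightarrow> dg p T (p e) < dg q T (q e))"
proof -
  define Y where "Y = topD D q T"
  define ED where "ED = edD D p q T"
  define nb where "nb = nbD D p q T"
  have finY: "finite Y" unfolding Y_def topD_def using fin by auto
  define RR where "RR = {R. R \<subseteq> Y \<and> R \<noteq> {} \<and> card (nb R) \<le> card R}"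
  have "R \<in> RR" using R unfolding RR_def Y_def nb_def by auto
  then obtain R0 where R0: "R0 \<in> RR" "\<forall>R'. R' \<in> RR \<longrightarrow> card R0 \<le> card R'"
    using ex_has_least_nat[of "\<lambda>R. R \<in> RR" R card] by blast
  have R0Y: "R0 \<subseteq> Y" and R0ne: "R0 \<noteq> {}" and R0c: "card (nb R0) \<le> card R0" using R0(1) unfolding RR_def by auto
  have finR0: "finite R0" using R0Y finY finite_subset by auto
  define A where "A = nb R0"
  have finA: "finite A" unfolding A_def nb_def nbD_def edD_def using fin by auto
  define G where "G = (\<lambda>a. {q e | e. e \<in> ED \<and> p e = a \<and> q e \<in> R0})"
  have GR0: "\<And>a. G a \<subseteq> R0" unfolding G_def by auto
  have finG: "\<forall>a\<in>A. finite (G a)" using GR0 finR0 finite_subset by metis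
  have nbmono: "\<And>R1 R2. R1 \<subseteq> R2 \<Longrightarrow> nb R1 \<subseteq> nb R2" unfolding nb_def nbD_def by auto
  have hallc: "\<forall>A'\<subseteq>A. card A' \<le> card (\<Union>(G ` A'))"
  proof (intro allI impI; rule ccontr)
    fix A' assume A': "A' \<subseteq> A" and lt: "\<not> card A' \<le> card (\<Union>(G ` A'))"
    define U where "U = \<Union>(G ` A')"
    have UR0: "U \<subseteq> R0" unfolding U_def using GR0 by auto
    define R' where "R' = R0 - U"
    have finA': "finite A'" using A' finA finite_subset by auto
    have "A' \<noteq> {}" using lt by auto
    then obtain a where a: "a \<in> A'" by auto
    then have "a \<in> nb R0" using A' A_def by auto
    then obtain e where e: "e \<in> ED" "q e \<in> R0" "p e = a" unfolding nb_def nbD_def ED_def by auto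
    have "q e \<in> U" unfolding U_def G_def using e a by auto
    then have Une: "U \<noteq> {}" by auto
    have sub: "nb R' \<subseteq> A - A'"
    proof
      fix x assume x: "x \<in> nb R'"
      then obtain f where f: "f \<in> ED" "q f \<in> R'" "x = p f" unfolding nb_def nbD_def ED_def by auto
      have "x \<in> A" using nbmono[of R' R0] x unfolding R'_def A_def by auto
      moreover have "x \<notin> A'"
      proof
        assume "x \<in> A'"
        then have "q f \<in> U" unfolding U_def G_def using f R'_def by auto
        then show False using f(2) unfolding R'_def by auto
      qed
      ultimately show "x \<in> A - A'" by auto
    qed
    have c1: "card (nb R') \<le> card A - card A'"
      using card_mono[OF _ sub] finA A' finA' by (simp add: card_Diff_subset)
    have finU: "finite U" using finite_subset[OF UR0 finR0] .
    have c2: "card R' = card R0 - card U" unfolding R'_def using card_Diff_subset[OF finU UR0] .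
    have c3: "card U < card A'" using lt unfolding U_def by simp
    have c4: "card A' \<le> card A" using card_mono[OF finA A'] .
    have c5: "card A \<le> card R0" using R0c A_def by simp
    have c6: "card U > 0" using Une finU by (simp add: card_gt_0_iff)
    have lt2: "card (nb R') < card R'" using c1 c2 c3 c4 c5 by linarith
    have "R' \<noteq> {}" using lt2 by auto
    then have "R' \<in> RR" unfolding RR_def using R0Y lt2 R'_def by auto
    then have "card R0 \<le> card R'" using R0(2) by blast
    then show False using c2 c6 c3 c4 c5 by linarith
  qed
  obtain g where g: "inj_on g A" "\<forall>a\<in>A. g a \<in> G a" using hall_theorem[OF finA finG hallc] by blast
  have goodM: "\<exists>M\<subseteq>T. M \<noteq> {} \<and> inj_on p M \<and> inj_on q M \<and> q ` M \<subseteq> R0 \<and> A \<subseteq> p ` M"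
  proof (cases "A = {}")
    case True
    obtain y where y: "y \<in> R0" using R0ne by auto
    then have "y \<in> q ` T" using R0Y unfolding Y_def topD_def by auto
    then obtain e0 where e0: "e0 \<in> T" "q e0 = y" by auto
    show ?thesis using True e0 y by (intro exI[of _ "{e0}"]) auto
  next
    case False
    define ch where "ch = (\<lambda>a. SOME e. e \<in> ED \<and> p e = a \<and> q e = g a)"
    have ch: "\<And>a. a \<in> A \<Longrightarrow> ch a \<in> ED \<and> p (ch a) = a \<and> q (ch a) = g a"
    proof -
      fix a assume "a \<in> A"
      then have "g a \<in> G a" using g by auto
      then have "\<exists>e. e \<in> ED \<and> p e = a \<and> q e = g a" unfolding G_def by auto
      then show "ch a \<in> ED \<and> p (ch a) = a \<and> q (ch a) = g a" unfolding ch_def by (rule someI_ex)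
    qed
    define M where "M = ch ` A"
    have "M \<subseteq> T" unfolding M_def using ch unfolding ED_def edD_def by auto
    moreover have "M \<noteq> {}" unfolding M_def using False by auto
    moreover have "inj_on p M"
      unfolding M_def by (rule inj_onI) (use ch in auto)
    moreover have "inj_on q M"
      unfolding M_def by (rule inj_onI) (use ch g(1) in \<open>auto dest: inj_onD\<close>)
    moreover have "q ` M \<subseteq> R0" unfolding M_def using ch g(2) GR0 by force
    moreover have "A \<subseteq> p ` M" unfolding M_def using ch by force
    ultimately show ?thesis by blast
  qed
  then obtain M where M: "M \<subseteq> T" "M \<noteq> {}" "inj_on p M" "inj_on q M" "q ` M \<subseteq> R0" "A \<subseteq> p ` M" by blast
  have "\<forall>e\<in>T. q e \<in> q ` M \<and> p e \<notin> p ` M \<longrightarrow> dg p T (p e) < dg q T (q e)"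
  proof (intro ballI impI)
    fix e assume e: "e \<in> T" "q e \<in> q ` M \<and> p e \<notin> p ` M"
    have qR: "q e \<in> R0" using e M(5) by auto
    then have dq: "dg q T (q e) = D" using R0Y unfolding Y_def topD_def by auto
    have "dg p T (p e) \<noteq> D"
    proof
      assume "dg p T (p e) = D"
      then have "e \<in> ED" unfolding ED_def edD_def using e dq by auto
      then have "p e \<in> A" unfolding A_def nb_def nbD_def using qR ED_def by auto
      then show False using e M(6) by auto
    qed
    then show "dg p T (p e) < dg q T (q e)" using Dp e dq by fastforce
  qed
  then show ?thesis using M by blast
qed

lemma match_exists:
  assumes fin: "finite T" and ne: "T \<noteq> {}"
  shows "\<exists>M\<subseteq>T. M \<noteq> {} \<and> inj_on p M \<and> inj_on q M \<and>
           ((\<forall>e\<in>T. q e \<in> q ` M \<and> p e \<notin> p ` M \<longrightarrow> dg p T (p e) < dg q T (q e)) \<or>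
            (\<forall>e\<in>T. p e \<in> p ` M \<and> q e \<notin> q ` M \<longrightarrow> dg q T (q e) < dg p T (p e)))"
proof -
  define S where "S = dg p T ` p ` T \<union> dg q T ` q ` T"
  define D where "D = Max S"
  have finS: "finite S" unfolding S_def using fin by auto
  have Sne: "S \<noteq> {}" unfolding S_def using ne by auto
  have Dp: "\<forall>e\<in>T. dg p T (p e) \<le> D" unfolding D_def using finS S_def by auto
  have Dq: "\<forall>e\<in>T. dg q T (q e) \<le> D" unfolding D_def using finS S_def by auto
  have DS: "D \<in> S" unfolding D_def using finS Sne by auto
  define X where "X = topD D p T"
  define Y where "Y = topD D q T"
  have finX: "finite X" "finite Y" unfolding X_def Y_def topD_def using fin by auto
  show ?thesis
  proof (cases "\<exists>R. R \<subseteq> Y \<and> R \<noteq> {} \<and> card (nbD D p q T R) \<le> card R")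
    case True
    then obtain R where "R \<subseteq> topD D q T" "R \<noteq> {}" "card (nbD D p q T R) \<le> card R" unfolding Y_def by blast
    from caseA[OF fin Dp this] show ?thesis by blast
  next
    case noR: False
    have n1: "nbD D q p T X \<subseteq> Y" unfolding nbD_def X_def Y_def topD_def edD_def by auto
    have n2: "nbD D p q T Y \<subseteq> X" unfolding nbD_def X_def Y_def topD_def edD_def by auto
    have "X \<noteq> {} \<and> card (nbD D q p T X) \<le> card X"
    proof (cases "Y = {}")
      case True
      then have "nbD D q p T X = {}" using n1 by auto
      moreover have "X \<noteq> {}"
      proof -
        from DS consider (a) "D \<in> dg p T ` p ` T" | (b) "D \<in> dg q T ` q ` T" unfolding S_def by auto
        then show ?thesis
        proof cases
          case a then show ?thesis unfolding X_def topD_def by auto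
        next
          case b then have "Y \<noteq> {}" unfolding Y_def topD_def by auto
          then show ?thesis using True by simp
        qed
      qed
      ultimately show ?thesis by simp
    next
      case False
      then have "card Y < card (nbD D p q T Y)" using noR by auto
      moreover have "card (nbD D p q T Y) \<le> card X" using card_mono[OF finX(1) n2] .
      moreover have "card (nbD D q p T X) \<le> card Y" using card_mono[OF finX(2) n1] .
      ultimately show ?thesis by auto
    qed
    then have "X \<subseteq> topD D p T" "X \<noteq> {}" "card (nbD D q p T X) \<le> card X" unfolding X_def by auto
    from caseA[where p=q and q=p, OF fin Dq this] obtain M where M: "M \<subseteq> T" "M \<noteq> {}" "inj_on q M" "inj_on p M"
      "\<forall>e\<in>T. p e \<in> p ` M \<and> q e \<notin> q ` M \<longrightarrow> dg q T (q e) < dg p T (p e)" by blast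
    show ?thesis apply (rule exI[of _ M]) using M by blast
  qed
qed

theorem ranking_lemma:
  assumes "finite T"
  shows "\<exists>rp rq. rankok p q T rp rq"
  using assms
proof (induction "card T" arbitrary: T rule: less_induct)
  case less
  show ?case
  proof (cases "T = {}")
    case True
    have "rankok p q T (\<lambda>_. 0) (\<lambda>_. 0)" unfolding rankok_def goodr_def fib_def dg_def True by (simp add: bij_betw_def)
    then show ?thesis by blast
  next
    case False
    obtain M where MM: "M \<subseteq> T \<and> M \<noteq> {} \<and> inj_on p M \<and> inj_on q M \<and>
            ((\<forall>e\<in>T. q e \<in> q ` M \<and> p e \<notin> p ` M \<longrightarrow> dg p T (p e) < dg q T (q e)) \<or>
            (\<forall>e\<in>T. p e \<in> p ` M \<and> q e \<notin> q ` M \<longrightarrow> dg q T (q e) < dg p T (p e)))"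
      using match_exists[where p=p and q=q, OF less.prems False] by blast
    have M: "M \<subseteq> T" "M \<noteq> {}" "inj_on p M" "inj_on q M" using MM by simp_all
    have P: "(\<forall>e\<in>T. q e \<in> q ` M \<and> p e \<notin> p ` M \<longrightarrow> dg p T (p e) < dg q T (q e)) \<or>
            (\<forall>e\<in>T. p e \<in> p ` M \<and> q e \<notin> q ` M \<longrightarrow> dg q T (q e) < dg p T (p e))"
      using MM by (elim conjE)
    have "card (T - M) < card T" using M(1,2) less.prems
      by (intro psubset_card_mono) auto
    then obtain rp' rq' where ih: "rankok p q (T - M) rp' rq'" using less.hyps less.prems by blast
    from P show ?thesis
    proof
      assume Pq: "\<forall>e\<in>T. q e \<in> q ` M \<and> p e \<notin> p ` M \<longrightarrow> dg p T (p e) < dg q T (q e)"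
      show ?thesis by (rule rank_step[OF less.prems M(1,3,4) Pq ih])
    next
      assume Pp: "\<forall>e\<in>T. p e \<in> p ` M \<and> q e \<notin> q ` M \<longrightarrow> dg q T (q e) < dg p T (p e)"
      obtain rq rp where "rankok q p T rq rp"
        using rank_step[OF less.prems M(1,4,3) Pp rankok_swap[OF ih]] by blast
      then show ?thesis using rankok_swap by blast
    qed
  qed
qed

definition garc :: "('e \<Rightarrow> 'v) \<Rightarrow> ('e \<Rightarrow> 'w) \<Rightarrow> ('e \<Rightarrow> nat) \<Rightarrow> ('e \<Rightarrow> nat) \<Rightarrow> 'e \<Rightarrow> 'e \<Rightarrow> bool" where
  "garc p q rp rq e f \<longleftrightarrow> (p e = p f \<and> rp f < rp e) \<or> (q e = q f \<and> rq f < rq e)"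

lemma gale_shapley:
  fixes S :: "'e set"
  assumes fin: "finite S"
  shows "\<exists>I\<subseteq>S. (\<forall>x\<in>I. \<forall>y\<in>I. \<not> garc p q rp rq x y) \<and> (\<forall>x\<in>S - I. \<exists>y\<in>I. garc p q rp rq x y)"
proof -
  define Prop where "Prop = (\<lambda>R. {e \<in> S - R. \<forall>f\<in>S - R. p f = p e \<longrightarrow> rp e \<le> rp f})"
  define Rej where "Rej = (\<lambda>R. {e \<in> Prop R. \<exists>f\<in>Prop R. q f = q e \<and> rq f < rq e})"
  define Inv where "Inv = (\<lambda>R. R \<subseteq> S \<and> (\<forall>e\<in>R. \<exists>f\<in>Prop R. q f = q e \<and> rq f < rq e))"
  have main: "\<And>R. Inv R \<Longrightarrow> \<exists>I\<subseteq>S. (\<forall>x\<in>I. \<forall>y\<in>I. \<not> garc p q rp rq x y) \<and> (\<forall>x\<in>S - I. \<exists>y\<in>I. garc p q rp rq x y)"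
  proof -
    fix R0 assume "Inv R0"
    then show "?thesis R0"
    proof (induction "card (S - R0)" arbitrary: R0 rule: less_induct)
      case (less R)
      have RS: "R \<subseteq> S" using less.prems unfolding Inv_def by auto
      show ?case
      proof (cases "Rej R = {}")
        case True
        define I where "I = Prop R"
        have "I \<subseteq> S" unfolding I_def Prop_def by auto
        moreover have "\<forall>x\<in>I. \<forall>y\<in>I. \<not> garc p q rp rq x y"
        proof (intro ballI notI)
          fix x y assume xy: "x \<in> I" "y \<in> I" "garc p q rp rq x y"
          show False
          proof (cases "p x = p y \<and> rp y < rp x")
            case True
            then show False using xy unfolding I_def Prop_def by force
          next
            case False
            then have "q x = q y \<and> rq y < rq x" using xy(3) unfolding garc_def by auto
            then have "x \<in> Rej R" using xy unfolding Rej_def I_def by auto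
            then show False using \<open>Rej R = {}\<close> by auto
          qed
        qed
        moreover have "\<forall>x\<in>S - I. \<exists>y\<in>I. garc p q rp rq x y"
        proof
          fix x assume x: "x \<in> S - I"
          show "\<exists>y\<in>I. garc p q rp rq x y"
          proof (cases "x \<in> R")
            case True
            then obtain f where f: "f \<in> Prop R" "q f = q x" "rq f < rq x" using less.prems unfolding Inv_def by blast
            then have "garc p q rp rq x f" unfolding garc_def by auto
            then show ?thesis using f(1) unfolding I_def by blast
          next
            case False
            define F where "F = {f \<in> S - R. p f = p x}"
            have finF: "finite F" unfolding F_def using fin by auto
            have xF: "x \<in> F" unfolding F_def using x False by auto
            obtain f where f: "f \<in> F" "\<forall>g\<in>F. rp f \<le> rp g"
              using ex_has_least_nat[of "\<lambda>f. f \<in> F" x rp] xF by blast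
            have fP: "f \<in> Prop R" using f unfolding Prop_def F_def by auto
            have "x \<notin> Prop R" using x unfolding I_def by auto
            then obtain g where g: "g \<in> S - R" "p g = p x" "rp g < rp x" using x False unfolding Prop_def by force
            have "rp f < rp x" using f(2) g unfolding F_def by force
            then have "garc p q rp rq x f" using f(1) unfolding garc_def F_def by auto
            then show ?thesis using fP unfolding I_def by auto
          qed
        qed
        ultimately show ?thesis by blast
      next
        case False
        define R' where "R' = R \<union> Rej R"
        have RejS: "Rej R \<subseteq> S - R" unfolding Rej_def Prop_def by auto
        have lt: "card (S - R') < card (S - R)"
        proof -
          have "S - R' \<subset> S - R" unfolding R'_def using RejS False by auto
          then show ?thesis using fin by (simp add: psubset_card_mono)
        qed
        have key: "\<And>e. (\<exists>g\<in>Prop R. q g = q e \<and> rq g < rq e) \<Longrightarrow> (\<exists>f\<in>Prop R'. q f = q e \<and> rq f < rq e)"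
        proof -
          fix e assume "\<exists>g\<in>Prop R. q g = q e \<and> rq g < rq e"
          then obtain g where g: "g \<in> Prop R" "q g = q e" "rq g < rq e" by blast
          define H where "H = {h \<in> Prop R. q h = q e}"
          have gH: "g \<in> H" unfolding H_def using g by auto
          obtain h where h: "h \<in> H" "\<forall>k\<in>H. rq h \<le> rq k"
            using ex_has_least_nat[of "\<lambda>h. h \<in> H" g rq] gH by blast
          have hP: "h \<in> Prop R" "q h = q e" using h(1) unfolding H_def by auto
          have hnot: "h \<notin> Rej R"
          proof
            assume "h \<in> Rej R"
            then obtain k where "k \<in> Prop R" "q k = q h" "rq k < rq h" unfolding Rej_def by auto
            then show False using h(2) hP(2) unfolding H_def by force
          qed
          have "h \<in> Prop R'"
            using hP(1) hnot unfolding Prop_def R'_def by auto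
          moreover have "rq h < rq e" using h(2) gH g(3) by force
          ultimately show "\<exists>f\<in>Prop R'. q f = q e \<and> rq f < rq e" using hP(2) by blast
        qed
        have "Inv R'"
          unfolding Inv_def
        proof
          show "R' \<subseteq> S" unfolding R'_def using RS RejS by auto
          show "\<forall>e\<in>R'. \<exists>f\<in>Prop R'. q f = q e \<and> rq f < rq e"
          proof
            fix e assume "e \<in> R'"
            then have "\<exists>g\<in>Prop R. q g = q e \<and> rq g < rq e"
              using less.prems unfolding R'_def Inv_def Rej_def by auto
            then show "\<exists>f\<in>Prop R'. q f = q e \<and> rq f < rq e" by (rule key)
          qed
        qed
        then show ?thesis using less.hyps[OF lt] by blast
      qed
    qed
  qed
  have "Inv {}" unfolding Inv_def by auto
  then show ?thesis by (rule main)
qed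

theorem mainTheorem14:
  fixes V :: "'v set" and E :: "'e set" and ends :: "'e \<Rightarrow> 'v set"
  assumes "finite V" and "finite E"
    and "\<forall>e\<in>E. ends e \<subseteq> V \<and> card (ends e) = 2"
    and "mmaxdeg V E ends < maxdeg E (line_adj ends)"
    and "BK_free E (line_adj ends)"
  shows "\<not> (\<exists>B \<subseteq> E. B \<noteq> {} \<and> bipartite_edges B ends \<and>
            (\<forall>e\<in>B. \<forall>x y. ends e = {x, y} \<longrightarrow>
               (mdeg B ends y \<ge> mdeg B ends x \<and> mdeg B ends x = mdeg E ends x) \<or>
               (mdeg B ends x \<ge> mdeg B ends y \<and> mdeg B ends y = mdeg E ends y)))"
proof
  assume "\<exists>B \<subseteq> E. B \<noteq> {} \<and> bipartite_edges B ends \<and>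
            (\<forall>e\<in>B. \<forall>x y. ends e = {x, y} \<longrightarrow>
               (mdeg B ends y \<ge> mdeg B ends x \<and> mdeg B ends x = mdeg E ends x) \<or>
               (mdeg B ends x \<ge> mdeg B ends y \<and> mdeg B ends y = mdeg E ends y))"
  then obtain B where B: "B \<subseteq> E" "B \<noteq> {}" "bipartite_edges B ends"
    and cond: "\<forall>e\<in>B. \<forall>x y. ends e = {x, y} \<longrightarrow>
               (mdeg B ends y \<ge> mdeg B ends x \<and> mdeg B ends x = mdeg E ends x) \<or>
               (mdeg B ends x \<ge> mdeg B ends y \<and> mdeg B ends y = mdeg E ends y)" by blast
  obtain c :: "'v \<Rightarrow> bool" where c: "\<forall>e\<in>B. \<forall>x\<in>ends e. \<forall>y\<in>ends e. x \<noteq> y \<longrightarrow> c x \<noteq> c y"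
    using B(3) unfolding bipartite_edges_def by blast
  have finB: "finite B" using B(1) assms(2) finite_subset by auto
  have two: "\<And>e. e \<in> B \<Longrightarrow> \<exists>a b. ends e = {a, b} \<and> a \<noteq> b"
    using assms(3) B(1) by (auto simp: card_2_iff)
  define pe where "pe = (\<lambda>e. SOME v. v \<in> ends e \<and> c v)"
  define qe where "qe = (\<lambda>e. SOME v. v \<in> ends e \<and> \<not> c v)"
  have pq: "\<And>e. e \<in> B \<Longrightarrow> ends e = {pe e, qe e} \<and> c (pe e) \<and> \<not> c (qe e)"
  proof -
    fix e assume e: "e \<in> B"
    obtain a b where ab: "ends e = {a, b}" "a \<noteq> b" using two[OF e] by blast
    have cab: "c a \<noteq> c b" using c e ab by auto
    have ex1: "\<exists>v. v \<in> ends e \<and> c v" using ab cab by (cases "c a") auto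
    have ex2: "\<exists>v. v \<in> ends e \<and> \<not> c v" using ab cab by (cases "c a") auto
    have p1: "pe e \<in> ends e \<and> c (pe e)" unfolding pe_def by (rule someI_ex[OF ex1])
    have q1: "qe e \<in> ends e \<and> \<not> c (qe e)" unfolding qe_def by (rule someI_ex[OF ex2])
    have "pe e \<noteq> qe e" using p1 q1 by auto
    then have "ends e = {pe e, qe e}" using p1 q1 ab by auto
    then show "ends e = {pe e, qe e} \<and> c (pe e) \<and> \<not> c (qe e)" using p1 q1 by auto
  qed
  obtain rp rq where rk: "rankok pe qe B rp rq" using ranking_lemma[OF finB] by blast
  have dgp: "\<And>a. c a \<Longrightarrow> dg pe B a = mdeg B ends a"
  proof -
    fix a assume ca: "c a"
    have "{e \<in> B. pe e = a} = {e \<in> B. a \<in> ends e}"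
    proof (intro set_eqI iffI)
      fix e assume "e \<in> {e \<in> B. pe e = a}" then show "e \<in> {e \<in> B. a \<in> ends e}" using pq by auto
    next
      fix e assume e: "e \<in> {e \<in> B. a \<in> ends e}"
      then have "a = pe e \<or> a = qe e" using pq by auto
      then show "e \<in> {e \<in> B. pe e = a}" using pq e ca by auto
    qed
    then show "dg pe B a = mdeg B ends a" unfolding dg_def fib_def mdeg_def by simp
  qed
  have dgq: "\<And>a. \<not> c a \<Longrightarrow> dg qe B a = mdeg B ends a"
  proof -
    fix a assume ca: "\<not> c a"
    have "{e \<in> B. qe e = a} = {e \<in> B. a \<in> ends e}"
    proof (intro set_eqI iffI)
      fix e assume "e \<in> {e \<in> B. qe e = a}" then show "e \<in> {e \<in> B. a \<in> ends e}" using pq by auto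
    next
      fix e assume e: "e \<in> {e \<in> B. a \<in> ends e}"
      then have "a = pe e \<or> a = qe e" using pq by auto
      then show "e \<in> {e \<in> B. qe e = a}" using pq e ca by auto
    qed
    then show "dg qe B a = mdeg B ends a" unfolding dg_def fib_def mdeg_def by simp
  qed
  define arc where "arc = garc pe qe rp rq"
  have bp: "\<And>a. bij_betw rp (fib pe B a) {..<dg pe B a}" using rk unfolding rankok_def goodr_def by blast
  have bq: "\<And>a. bij_betw rq (fib qe B a) {..<dg qe B a}" using rk unfolding rankok_def goodr_def by blast
  have arc_bound: "\<And>e. e \<in> B \<Longrightarrow> card {f\<in>B. arc e f} \<le> rp e + rq e"
  proof -
    fix e assume e: "e \<in> B"
    define S1 where "S1 = {f\<in>B. pe f = pe e \<and> rp f < rp e}"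
    define S2 where "S2 = {f\<in>B. qe f = qe e \<and> rq f < rq e}"
    have sub: "{f\<in>B. arc e f} \<subseteq> S1 \<union> S2" unfolding arc_def garc_def S1_def S2_def by auto
    have "inj_on rp (fib pe B (pe e))" using bp bij_betw_def by blast
    then have i1: "inj_on rp S1" unfolding S1_def fib_def by (rule inj_on_subset) auto
    have "inj_on rq (fib qe B (qe e))" using bq bij_betw_def by blast
    then have i2: "inj_on rq S2" unfolding S2_def fib_def by (rule inj_on_subset) auto
    have c1: "card S1 \<le> rp e" using card_inj_on_le[OF i1, of "{..<rp e}"] unfolding S1_def by auto
    have c2: "card S2 \<le> rq e" using card_inj_on_le[OF i2, of "{..<rq e}"] unfolding S2_def by auto
    have "card {f\<in>B. arc e f} \<le> card (S1 \<union> S2)"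
      by (rule card_mono) (use finB sub S1_def S2_def in auto)
    also have "\<dots> \<le> card S1 + card S2" by (rule card_Un_le)
    finally show "card {f\<in>B. arc e f} \<le> rp e + rq e" using c1 c2 by linarith
  qed
  have sumlt: "\<And>e. e \<in> B \<Longrightarrow> rp e + rq e < max (mdeg B ends (pe e)) (mdeg B ends (qe e))"
    using rk pq dgp dgq unfolding rankok_def by metis
  have mdeg_split: "\<And>v. mdeg E ends v = mdeg B ends v + card {w\<in>E - B. v \<in> ends w}"
  proof -
    fix v
    have "{w\<in>E. v \<in> ends w} = {w\<in>B. v \<in> ends w} \<union> {w\<in>E - B. v \<in> ends w}" using B(1) by auto
    moreover have "finite {w\<in>B. v \<in> ends w}" "finite {w\<in>E - B. v \<in> ends w}" using finB assms(2) by auto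
    ultimately show "mdeg E ends v = mdeg B ends v + card {w\<in>E - B. v \<in> ends w}"
      unfolding mdeg_def by (simp add: card_Un_disjoint disjoint_iff)
  qed
  have mm: "\<And>v. v \<in> V \<Longrightarrow> mdeg E ends v \<le> mmaxdeg V E ends"
    unfolding mmaxdeg_def using assms(1) by (intro Max_ge) auto
  have fHbound: "\<And>e. e \<in> B \<Longrightarrow> int (max (mdeg B ends (pe e)) (mdeg B ends (qe e))) \<le> fH E (line_adj ends) B e"
  proof -
    fix e assume e: "e \<in> B"
    define a where "a = pe e"
    define b where "b = qe e"
    have ends: "ends e = {a, b}" using pq[OF e] unfolding a_def b_def by auto
    have eE: "e \<in> E" using e B(1) by auto
    have aV: "a \<in> V" "b \<in> V" using assms(3) eE ends by auto
    define cA where "cA = card {w\<in>E - B. a \<in> ends w}"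
    define cB where "cB = card {w\<in>E - B. b \<in> ends w}"
    have sub: "{w\<in>E. line_adj ends e w} \<subseteq> ({w\<in>B. line_adj ends e w} \<union> {w\<in>E - B. a \<in> ends w}) \<union> {w\<in>E - B. b \<in> ends w}"
      unfolding line_adj_def using ends by auto
    have "card {w\<in>E. line_adj ends e w} \<le> card (({w\<in>B. line_adj ends e w} \<union> {w\<in>E - B. a \<in> ends w}) \<union> {w\<in>E - B. b \<in> ends w})"
      by (rule card_mono) (use assms(2) finB sub in auto)
    also have "\<dots> \<le> card ({w\<in>B. line_adj ends e w} \<union> {w\<in>E - B. a \<in> ends w}) + cB" unfolding cB_def by (rule card_Un_le)
    also have "\<dots> \<le> card {w\<in>B. line_adj ends e w} + cA + cB" unfolding cA_def using card_Un_le[of "{w\<in>B. line_adj ends e w}" "{w\<in>E - B. a \<in> ends w}"] by linarith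
    finally have h1: "deg E (line_adj ends) e \<le> deg B (line_adj ends) e + cA + cB" unfolding deg_def .
    have h2: "mdeg E ends a = mdeg B ends a + cA" "mdeg E ends b = mdeg B ends b + cB"
      unfolding cA_def cB_def by (rule mdeg_split)+
    have h4: "mdeg E ends a \<le> mmaxdeg V E ends" "mdeg E ends b \<le> mmaxdeg V E ends" using mm aV by auto
    have h6: "mmaxdeg V E ends + 1 \<le> maxdeg E (line_adj ends)" using assms(4) by simp
    have h7: "(mdeg B ends b \<ge> mdeg B ends a \<and> mdeg B ends a = mdeg E ends a) \<or>
               (mdeg B ends a \<ge> mdeg B ends b \<and> mdeg B ends b = mdeg E ends b)" using cond e ends by blast
    have i1: "int (deg E (line_adj ends) e) \<le> int (deg B (line_adj ends) e) + int cA + int cB" using h1 by linarith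
    have i2: "int (mdeg E ends a) = int (mdeg B ends a) + int cA" "int (mdeg E ends b) = int (mdeg B ends b) + int cB"
      using h2 by simp_all
    have i4: "int (mdeg E ends a) \<le> int (mmaxdeg V E ends)" "int (mdeg E ends b) \<le> int (mmaxdeg V E ends)"
      using h4 by simp_all
    have i6: "int (mmaxdeg V E ends) + 1 \<le> int (maxdeg E (line_adj ends))" using h6 by linarith
    show "int (max (mdeg B ends (pe e)) (mdeg B ends (qe e))) \<le> fH E (line_adj ends) B e"
      unfolding fH_def a_def[symmetric] b_def[symmetric]
      using h7 i1 i2 i4 i6 by (auto simp: max_def)
  qed
  define Dset where "Dset = {(e, f, False) | e f. e \<in> B \<and> f \<in> B \<and> arc e f}"
  have finD: "finite Dset" using finB
    by (intro finite_subset[of Dset "B \<times> B \<times> {False}"]) (auto simp: Dset_def)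
  define D where "D = mset_set Dset"
  have setD: "set_mset D = Dset" unfolding D_def using finD by simp
  have arcD: "\<And>x y. arc_of D x y \<longleftrightarrow> x \<in> B \<and> y \<in> B \<and> arc x y"
    unfolding arc_of_def setD Dset_def by auto
  have outD: "\<And>x. x \<in> B \<Longrightarrow> outdeg_of D x \<le> card {f\<in>B. arc x f}"
  proof -
    fix x assume x: "x \<in> B"
    have "{t \<in> Dset. (\<lambda>(u, v, b). u = x \<or> (b \<and> v = x)) t} = (\<lambda>f. (x, f, False)) ` {f\<in>B. arc x f}"
      unfolding Dset_def using x by auto
    then have "outdeg_of D x = card ((\<lambda>f. (x, f, False)) ` {f\<in>B. arc x f})"
      unfolding outdeg_of_def D_def using finD by simp
    also have "\<dots> \<le> card {f\<in>B. arc x f}" by (rule card_image_le) (use finB in auto)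
    finally show "outdeg_of D x \<le> card {f\<in>B. arc x f}" .
  qed
  have arc_ne: "\<And>x y. arc x y \<Longrightarrow> x \<noteq> y" unfolding arc_def garc_def by auto
  have "f_KP B (line_adj ends) (fH E (line_adj ends) B)"
    unfolding f_KP_def
  proof (intro exI[of _ D] conjI)
    show "\<forall>(u, v, b)\<in>#D. u \<in> B \<and> v \<in> B \<and> u \<noteq> v"
      unfolding setD Dset_def using arc_ne by auto
    show "\<forall>u\<in>B. \<forall>v\<in>B. line_adj ends u v \<longrightarrow> (\<exists>(a, c, b)\<in>#D. {a, c} = {u, v})"
    proof (intro ballI impI)
      fix u v assume uv: "u \<in> B" "v \<in> B" "line_adj ends u v"
      have une: "u \<noteq> v" using uv(3) unfolding line_adj_def by auto
      obtain w where w: "w \<in> ends u" "w \<in> ends v" using uv(3) unfolding line_adj_def by auto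
      have "arc u v \<or> arc v u"
      proof (cases "c w")
        case True
        then have "w = pe u" "w = pe v" using w pq uv by auto
        then have "u \<in> fib pe B w" "v \<in> fib pe B w" using uv unfolding fib_def by auto
        then have "rp u \<noteq> rp v" using une bp[of w] unfolding bij_betw_def inj_on_def by blast
        then show ?thesis unfolding arc_def garc_def using \<open>w = pe u\<close> \<open>w = pe v\<close> by auto
      next
        case False
        then have "w = qe u" "w = qe v" using w pq uv by auto
        then have "u \<in> fib qe B w" "v \<in> fib qe B w" using uv unfolding fib_def by auto
        then have "rq u \<noteq> rq v" using une bq[of w] unfolding bij_betw_def inj_on_def by blast
        then show ?thesis unfolding arc_def garc_def using \<open>w = qe u\<close> \<open>w = qe v\<close> by auto
      qed
      then show "\<exists>(a, c, b)\<in>#D. {a, c} = {u, v}"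
        unfolding setD Dset_def using uv by auto
    qed
    show "\<forall>v\<in>B. int (outdeg_of D v) < fH E (line_adj ends) B v"
    proof
      fix v assume v: "v \<in> B"
      have "outdeg_of D v < max (mdeg B ends (pe v)) (mdeg B ends (qe v))"
        using outD[OF v] arc_bound[OF v] sumlt[OF v] by linarith
      then show "int (outdeg_of D v) < fH E (line_adj ends) B v" using fHbound[OF v] by linarith
    qed
    show "kernel_perfect B (arc_of D)"
      unfolding kernel_perfect_def
    proof (intro allI impI)
      fix S assume S: "S \<subseteq> B"
      have finS: "finite S" using S finB finite_subset by auto
      obtain I where I: "I \<subseteq> S" "\<forall>x\<in>I. \<forall>y\<in>I. \<not> garc pe qe rp rq x y" "\<forall>x\<in>S - I. \<exists>y\<in>I. garc pe qe rp rq x y"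
        using gale_shapley[OF finS, of pe qe rp rq] by blast
      show "\<exists>I\<subseteq>S. (\<forall>x\<in>I. \<forall>y\<in>I. \<not> arc_of D x y) \<and> (\<forall>x\<in>S - I. \<exists>y\<in>I. arc_of D x y)"
        apply (rule exI[of _ I])
        using I S unfolding arcD arc_def by blast
    qed
  qed
  moreover have "\<not> f_KP B (line_adj ends) (fH E (line_adj ends) B)"
    using assms(5) B(1,2) unfolding BK_free_def by blast
  ultimately show False by contradiction
qed

end
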